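(* For $n\ge0$ let $w_n$ be the number obtained by writing $n$ in base $2$ and reading the resulting string of digits in base $3$ (so if $n=\sum_j \epsilon_j2^j$ with $\epsilon_j\in\{0,1\}$, then $w_n=\sum_j\epsilon_j3^j$). If $\alpha$ is irrational, then $\alpha w_n\bmod 1$ is uniformly distributed on $[0,1)$. *)

theory Defs
  imports Complex_Main
begin

text \<open>w n: binary digits of n read in base 3. Since n < 2^n, all binary digits
  of n with index j >= n vanish, so summing over j < n covers all digits.\<close>
definition w :: "nat \<Rightarrow> nat" where
  "w n = (\<Sum>j<n. ((n div 2 ^ j) mod 2) * 3 ^ j)"

definition uniformly_distributed_mod1 :: "(nat \<Rightarrow> real) \<Rightarrow> bool" where
  "uniformly_distributed_mod1 x \<longleftrightarrow>
     (\<forall>a b. 0 \<le> a \<and> a < b \<and> b \<le> 1 \<longrightarrow>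
        (\<lambda>N. real (card {n. n < N \<and> a \<le> frac (x n) \<and> frac (x n) < b}) / real N)
          \<longlonglongrightarrow> b - a)"

end

theory Submission
  imports Defs "HOL-Analysis.Analysis"
begin


lemma dsum_ext:
  fixes n K K' :: nat
  assumes "n < 2^K" "K \<le> K'"
  shows "(\<Sum>j<K'. ((n div 2^j) mod 2) * (3::nat)^j) = (\<Sum>j<K. ((n div 2^j) mod 2) * 3^j)"
proof (rule sum.mono_neutral_right)
  show "finite {..<K'}" by simp
  show "{..<K} \<subseteq> {..<K'}" using assms by auto
  show "\<forall>i\<in>{..<K'} - {..<K}. (n div 2^i mod 2) * 3^i = 0"
  proof
    fix i assume "i \<in> {..<K'} - {..<K}"
    then have "K \<le> i" by auto
    then have "(2::nat)^K \<le> 2^i" by (rule power_increasing) simp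
    then have "n < 2^i" using assms(1) by linarith
    then show "(n div 2^i mod 2) * 3^i = 0" by simp
  qed
qed

lemma w_eq: "n < 2^K \<Longrightarrow> w n = (\<Sum>j<K. ((n div 2^j) mod 2) * 3^j)"
proof -
  assume a: "n < 2^K"
  have b: "n < 2^n" by (rule less_exp)
  have "w n = (\<Sum>j<max n K. ((n div 2^j) mod 2) * 3^j)"
    unfolding w_def using dsum_ext[OF b, of "max n K"] by simp
  also have "\<dots> = (\<Sum>j<K. ((n div 2^j) mod 2) * 3^j)"
    using dsum_ext[OF a, of "max n K"] by simp
  finally show ?thesis .
qed

lemma w_rec: "w n = n mod 2 + 3 * w (n div 2)"
proof -
  have "n < 2^n" by (rule less_exp)
  also have "(2::nat)^n < 2^Suc n" by simp
  finally have "w n = (\<Sum>j<Suc n. ((n div 2^j) mod 2) * 3^j)" by (rule w_eq)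
  also have "\<dots> = (n mod 2) + (\<Sum>j<n. ((n div 2^Suc j) mod 2) * 3^Suc j)"
    by (subst sum.lessThan_Suc_shift) simp
  also have "(\<Sum>j<n. ((n div 2^Suc j) mod 2) * 3^Suc j) = 3 * (\<Sum>j<n. (((n div 2) div 2^j) mod 2) * 3^j)"
    by (simp add: sum_distrib_left div_mult2_eq mult_ac)
  also have "n div 2 < 2^n" by (meson div_le_dividend le_less_trans less_exp)
  then have "(\<Sum>j<n. (((n div 2) div 2^j) mod 2) * 3^j) = w (n div 2)"
    using w_eq[of "n div 2" n] by simp
  finally show ?thesis by simp
qed

lemma w_0 [simp]: "w 0 = 0" by (simp add: w_def)
lemma w_1 [simp]: "w 1 = 1" using w_rec[of 1] by simp
lemma w_Suc0 [simp]: "w (Suc 0) = 1" using w_1 by simp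

lemma w_block: "r < 2^k \<Longrightarrow> w (2^k * m + r) = 3^k * w m + w r"
proof (induction k arbitrary: r)
  case 0
  then show ?case by simp
next
  case (Suc k)
  have e: "2^Suc k * m + r = 2 * (2^k*m) + r" by simp
  have e1: "(2 * (2^k*m) + r) mod 2 = r mod 2" by simp
  have e2: "(2 * (2^k*m) + r) div 2 = 2^k*m + r div 2" by simp
  have rd: "r div 2 < 2^k" using Suc.prems by simp
  have "w (2^Suc k * m + r) = r mod 2 + 3 * w (2^k*m + r div 2)"
    unfolding e using w_rec[of "2 * (2^k*m) + r"] e1 e2 by simp
  also have "\<dots> = r mod 2 + 3 * (3^k * w m + w (r div 2))" using Suc.IH[OF rd] by simp
  also have "\<dots> = 3^Suc k * w m + (r mod 2 + 3 * w (r div 2))" by simp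
  also have "r mod 2 + 3 * w (r div 2) = w r" using w_rec[of r] by simp
  finally show ?case .
qed

definition E :: "real \<Rightarrow> nat \<Rightarrow> complex" where "E \<theta> n = cis (2*pi*\<theta>*real (w n))"
definition P :: "real \<Rightarrow> nat \<Rightarrow> complex" where "P \<theta> k = (\<Sum>r<2^k. E \<theta> r)"

lemma norm_E [simp]: "norm (E \<theta> n) = 1" by (simp add: E_def)

lemma E_block: assumes "r<2^k" shows "E \<theta> (2^k*m + r) = cis(2*pi*\<theta>*3^k*w m) * E \<theta> r"
proof -
  have "real (w (2^k*m+r)) = 3^k * real (w m) + real (w r)" using w_block[OF assms] by simp
  then show ?thesis unfolding E_def cis_mult by (simp add: algebra_simps)
qed

lemma block_sum: "(\<Sum>r<2^k. E \<theta> (2^k*m + r)) = cis(2*pi*\<theta>*3^k*w m) * P \<theta> k"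
  unfolding P_def sum_distrib_left by (rule sum.cong) (auto simp: E_block)

lemma sum_split: "(\<Sum>i<m+(n::nat). f i) = (\<Sum>i<m. f i) + (\<Sum>i<n. f (m+i))"
  by (induction n) (simp_all add: add_ac)

lemma P_Suc: "P \<theta> (Suc k) = P \<theta> k * (1 + cis(2*pi*\<theta>*3^k))"
proof -
  have "P \<theta> (Suc k) = (\<Sum>i<2^k+2^k. E \<theta> i)" by (simp add: P_def mult_2)
  also have "\<dots> = P \<theta> k + (\<Sum>i<2^k. E \<theta> (2^k*1 + i))" by (simp add: sum_split P_def)
  also have "\<dots> = P \<theta> k * (1 + cis(2*pi*\<theta>*3^k))" by (simp only: block_sum) (simp add: algebra_simps)
  finally show ?thesis .
qed

lemma P_0 [simp]: "P \<theta> 0 = 1" by (simp add: P_def E_def)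

lemma norm_block: "norm (\<Sum>n<2^k*q. E \<theta> n) \<le> q * norm (P \<theta> k)"
proof (induction q)
  case 0 then show ?case by simp
next
  case (Suc q)
  have ee: "2^k*Suc q = 2^k*q + 2^k" by simp
  have "(\<Sum>n<2^k*Suc q. E \<theta> n) = (\<Sum>n<2^k*q. E \<theta> n) + (\<Sum>i<2^k. E \<theta> (2^k*q + i))"
    unfolding ee by (rule sum_split)
  also have "\<dots> = (\<Sum>n<2^k*q. E \<theta> n) + cis(2*pi*\<theta>*3^k*w q) * P \<theta> k" by (simp only: block_sum)
  finally have "norm (\<Sum>n<2^k*Suc q. E \<theta> n) \<le> norm (\<Sum>n<2^k*q. E \<theta> n) + norm (P \<theta> k)"
    by (metis norm_triangle_ineq norm_mult norm_cis mult_1)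
  then show ?case using Suc.IH by (simp add: algebra_simps)
qed

lemma norm_S: "norm (\<Sum>n<N. E \<theta> n) \<le> real N / 2^k * norm (P \<theta> k) + 2^k"
proof -
  define q where "q = N div 2^k"
  define r where "r = N mod 2^k"
  have N: "N = 2^k*q + r" unfolding q_def r_def by simp
  have r: "r < 2^k" unfolding r_def by simp
  have "norm (\<Sum>n<N. E \<theta> n) \<le> norm (\<Sum>n<2^k*q. E \<theta> n) + norm (\<Sum>i<r. E \<theta> (2^k*q + i))"
    unfolding N sum_split by (rule norm_triangle_ineq)
  also have "norm (\<Sum>i<r. E \<theta> (2^k*q + i)) \<le> (\<Sum>i<r. norm (E \<theta> (2^k*q + i)))" by (rule norm_sum)
  also have "\<dots> = r" by simp
  also have "real r \<le> 2^k" using r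
  proof -
    have "real r \<le> real (2^k)" using r by simp
    then show ?thesis by simp
  qed
  also have "real q \<le> real N / real (2^k)" unfolding q_def by (rule of_nat_div_le_of_nat)
  then have "real q \<le> real N / 2^k" by simp
  then have "real q * norm (P \<theta> k) \<le> real N / 2^k * norm (P \<theta> k)" by (rule mult_right_mono) simp
  with norm_block[where \<theta>=\<theta> and k=k and q=q] have "norm (\<Sum>n<2^k*q. E \<theta> n) \<le> real N / 2^k * norm (P \<theta> k)" by linarith
  finally show ?thesis by simp
qed



lemma norm_1cis_sq: "(norm (1 + cis x))^2 = 2 + 2*cos x"
proof -
  have "(norm (1 + cis x))^2 = (1 + cos x)^2 + (sin x)^2"
    by (simp add: cmod_power2)
  also have "\<dots> = 2 + 2*cos x" using sin_cos_squared_add[of x] by (simp add: power2_eq_square algebra_simps)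
  finally show ?thesis .
qed

lemma norm_1cis_le2: "norm (1 + cis x) \<le> 2"
  using norm_triangle_ineq[of 1 "cis x"] by simp

lemma good_bound:
  fixes x :: real
  assumes "\<forall>n::int. 1/8 \<le> \<bar>x - n\<bar>"
  shows "norm (1 + cis (2*pi*x)) \<le> 15/8"
proof -
  define t where "t = x - of_int \<lfloor>x\<rfloor>"
  have t0: "1/8 \<le> t" using assms[rule_format, of "\<lfloor>x\<rfloor>"] unfolding t_def by linarith
  have t1: "t \<le> 7/8" using assms[rule_format, of "\<lfloor>x\<rfloor> + 1"] unfolding t_def by linarith
  have "cos (2*pi*x) = cos (2*pi*t + 2*pi * of_int \<lfloor>x\<rfloor>)" unfolding t_def by (simp add: algebra_simps)
  also have "\<dots> = cos (2*pi*t)"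
    by (simp add: cos_add)
  finally have ce: "cos (2*pi*x) = cos (2*pi*t)" .
  have "cos (2*pi*t) \<le> cos (pi/4)"
  proof (cases "t \<le> 1/2")
    case True
    show ?thesis by (rule cos_monotone_0_pi_le) (use t0 True in \<open>auto simp: field_simps\<close>)
  next
    case False
    have "cos (2*pi*t) = cos (2*pi - 2*pi*t)" by (simp add: cos_diff)
    also have "\<dots> \<le> cos (pi/4)" by (rule cos_monotone_0_pi_le) (use t1 False in \<open>auto simp: field_simps\<close>)
    finally show ?thesis .
  qed
  also have "cos (pi/4) \<le> 3/4"
  proof -
    have "sqrt 2 \<le> 3/2" by (rule real_le_lsqrt) (auto simp: power2_eq_square)
    then show ?thesis by (simp add: cos_45)
  qed
  finally have "(norm (1 + cis (2*pi*x)))^2 \<le> (15/8)^2" using ce norm_1cis_sq[of "2*pi*x"] by (simp add: power2_eq_square)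
  then show ?thesis by (rule power2_le_imp_le) simp
qed

lemma infinitely_good:
  fixes \<theta> :: real
  assumes irr: "\<theta> \<notin> \<rat>"
  shows "\<exists>j\<ge>J. \<forall>n::int. 1/8 \<le> \<bar>\<theta>*3^j - n\<bar>"
proof (rule ccontr)
  assume "\<not> ?thesis"
  then have h: "\<forall>j. \<exists>n::int. J \<le> j \<longrightarrow> \<bar>\<theta>*3^j - n\<bar> < 1/8" by (meson not_le)
  obtain nn :: "nat \<Rightarrow> int" where nn0: "\<forall>j. J \<le> j \<longrightarrow> \<bar>\<theta>*3^j - nn j\<bar> < 1/8"
    using choice[OF h] by blast
  then have nn: "\<And>j. J \<le> j \<Longrightarrow> \<bar>\<theta>*3^j - nn j\<bar> < 1/8" by blast
  define d where "d j = \<theta>*3^j - nn j" for j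
  have dlt: "J \<le> j \<Longrightarrow> \<bar>d j\<bar> < 1/8" for j using nn unfolding d_def by simp
  have dstep: "d (Suc j) = 3 * d j" if "J \<le> j" for j
  proof -
    have a1: "\<bar>d j\<bar> < 1/8" "\<bar>d (Suc j)\<bar> < 1/8" using dlt that by auto
    have "of_int (nn (Suc j) - 3 * nn j) = 3 * d j - d (Suc j)" unfolding d_def by (simp add: algebra_simps)
    then have "\<bar>of_int (nn (Suc j) - 3 * nn j)\<bar> < (1::real)" using a1 by linarith
    then have "nn (Suc j) - 3 * nn j = 0" by linarith
    then have "of_int (nn (Suc j)) = (3::real) * of_int (nn j)" by (simp add: algebra_simps)
    then show ?thesis unfolding d_def by (simp add: algebra_simps)
  qed
  have dpow: "d (J + i) = 3^i * d J" for i
  proof (induction i)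
    case 0 then show ?case by simp
  next
    case (Suc i)
    have "d (J + Suc i) = 3 * d (J + i)" using dstep[of "J+i"] by simp
    then show ?case using Suc.IH by simp
  qed
  show False
  proof (cases "d J = 0")
    case True
    then have "\<theta> = of_int (nn J) / 3^J" unfolding d_def by (simp add: field_simps)
    then have "\<theta> \<in> \<rat>" by simp
    with irr show False by simp
  next
    case False
    then have pos: "0 < \<bar>d J\<bar>" by simp
    obtain i where i: "1 / (8 * \<bar>d J\<bar>) < 3^i" using real_arch_pow[of 3 "1 / (8 * \<bar>d J\<bar>)"] by auto
    then have "1/8 < 3^i * \<bar>d J\<bar>" using pos by (simp add: field_simps)
    then have "1/8 < \<bar>d (J+i)\<bar>" unfolding dpow by (simp add: abs_mult)
    with dlt[of "J+i"] show False by simp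
  qed
qed

lemma P_Suc_norm: "norm (P \<theta> (Suc k)) / 2^Suc k = norm (P \<theta> k) / 2^k * (norm (1 + cis(2*pi*\<theta>*3^k)) / 2)"
  by (simp add: P_Suc norm_mult)

lemma rho_small:
  fixes \<theta> :: real
  assumes irr: "\<theta> \<notin> \<rat>" and e: "\<epsilon> > 0"
  shows "\<exists>k. norm (P \<theta> k) / 2^k < \<epsilon>"
proof -
  define \<rho> where "\<rho> k = norm (P \<theta> k) / 2^k" for k
  have rec: "\<rho> (Suc k) = \<rho> k * (norm (1 + cis(2*pi*\<theta>*3^k)) / 2)" for k
    unfolding \<rho>_def by (rule P_Suc_norm)
  have nonneg: "0 \<le> \<rho> k" for k unfolding \<rho>_def by simp
  have mono: "\<rho> (Suc k) \<le> \<rho> k" for k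
  proof -
    have "\<rho> k * (norm (1 + cis(2*pi*\<theta>*3^k)) / 2) \<le> \<rho> k * 1"
      by (rule mult_left_mono) (use nonneg[of k] norm_1cis_le2[of "2*pi*\<theta>*3^k"] in auto)
    then show ?thesis using rec[of k] by simp
  qed
  have mono': "\<rho> j \<le> \<rho> k" if "k \<le> j" for j k
    using that
  proof (induction j)
    case 0 then show ?case by simp
  next
    case (Suc j)
    then show ?case using mono[of j] by (cases "k = Suc j") auto
  qed
  have ex15: "\<exists>K. \<rho> K \<le> (15/16)^m" for m
  proof (induction m)
    case 0
    have "\<rho> 0 = 1" unfolding \<rho>_def by simp
    then show ?case by (intro exI[of _ 0]) simp
  next
    case (Suc m)
    then obtain K where K: "\<rho> K \<le> (15/16)^m" by blast
    obtain j where j: "j \<ge> K" "\<forall>n::int. 1/8 \<le> \<bar>\<theta>*3^j - n\<bar>" using infinitely_good[OF irr] by blast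
    have "norm (1 + cis (2*pi*(\<theta>*3^j))) \<le> 15/8" by (rule good_bound[OF j(2)])
    then have "\<rho> (Suc j) \<le> \<rho> j * (15/16)"
      unfolding rec by (intro mult_left_mono) (auto simp: nonneg mult.assoc)
    also have "\<dots> \<le> \<rho> K * (15/16)" using mono'[OF j(1)] by simp
    also have "\<dots> \<le> (15/16)^m * (15/16)" using K by simp
    finally show ?case by (auto simp: mult.commute)
  qed
  obtain m where m: "(15/16::real)^m < \<epsilon>" using real_arch_pow_inv[OF e, of "15/16"] by auto
  obtain K where "\<rho> K \<le> (15/16)^m" using ex15 by blast
  then have "\<rho> K < \<epsilon>" using m by linarith
  then show ?thesis unfolding \<rho>_def by blast
qed

lemma weyl_sum:
  fixes \<theta> :: real
  assumes irr: "\<theta> \<notin> \<rat>"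
  shows "(\<lambda>N. (\<Sum>n<N. E \<theta> n) / of_nat N) \<longlonglongrightarrow> 0"
proof (rule LIMSEQ_I)
  fix r :: real assume r: "0 < r"
  obtain k where k: "norm (P \<theta> k) / 2^k < r/2" using rho_small[OF irr, of "r/2"] r by auto
  obtain N0 :: nat where N0: "real N0 > 2 * 2^k / r" using reals_Archimedean2 by blast
  have "norm ((\<Sum>n<N. E \<theta> n) / of_nat N - 0) < r" if N: "N0 \<le> N" for N
  proof -
    have "2 * 2^k / r \<ge> 0" using r by simp
    then have Npos: "real N > 0" using N0 N by linarith
    have "2 * 2^k / r < real N" using N0 N by linarith
    then have b2: "2^k / real N < r/2" using r Npos by (simp add: field_simps)
    have "norm ((\<Sum>n<N. E \<theta> n) / of_nat N) = norm (\<Sum>n<N. E \<theta> n) / real N"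
      by (simp add: norm_divide)
    also have "\<dots> \<le> (real N / 2^k * norm (P \<theta> k) + 2^k) / real N"
      by (rule divide_right_mono[OF norm_S]) simp
    also have "\<dots> = norm (P \<theta> k) / 2^k + 2^k / real N" using Npos by (simp add: field_simps)
    also have "\<dots> < r" using k b2 by linarith
    finally show ?thesis by simp
  qed
  then show "\<exists>no. \<forall>n\<ge>no. norm ((\<Sum>n<n. E \<theta> n) / of_nat n - 0) < r" by blast
qed



fun evalT :: "(complex \<times> int) list \<Rightarrow> complex \<Rightarrow> complex" where
  "evalT [] z = 0"
| "evalT (p#L) z = fst p * z powi snd p + evalT L z"

fun meanT :: "(complex \<times> int) list \<Rightarrow> complex" where
  "meanT [] = 0"
| "meanT (p#L) = (if snd p = 0 then fst p else 0) + meanT L"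

definition scaleT :: "complex \<Rightarrow> (complex \<times> int) list \<Rightarrow> (complex \<times> int) list" where
  "scaleT a L = map (\<lambda>p. (a * fst p, snd p)) L"

definition mulT1 :: "complex \<times> int \<Rightarrow> (complex \<times> int) list \<Rightarrow> (complex \<times> int) list" where
  "mulT1 p L = map (\<lambda>q. (fst p * fst q, snd p + snd q)) L"

fun mulT :: "(complex \<times> int) list \<Rightarrow> (complex \<times> int) list \<Rightarrow> (complex \<times> int) list" where
  "mulT [] L2 = []"
| "mulT (p#L1) L2 = mulT1 p L2 @ mulT L1 L2"

definition cnjT :: "(complex \<times> int) list \<Rightarrow> (complex \<times> int) list" where
  "cnjT L = map (\<lambda>p. (cnj (fst p), - snd p)) L"

lemma evalT_append: "evalT (L1 @ L2) z = evalT L1 z + evalT L2 z"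
  by (induction L1) auto

lemma evalT_scale: "evalT (scaleT a L) z = a * evalT L z"
  unfolding scaleT_def by (induction L) (auto simp: algebra_simps)

lemma evalT_mulT1: "z \<noteq> 0 \<Longrightarrow> evalT (mulT1 p L) z = fst p * z powi snd p * evalT L z"
  unfolding mulT1_def by (induction L) (auto simp: algebra_simps power_int_add)

lemma evalT_mulT: "z \<noteq> 0 \<Longrightarrow> evalT (mulT L1 L2) z = evalT L1 z * evalT L2 z"
  by (induction L1) (auto simp: evalT_append evalT_mulT1 algebra_simps)

lemma cnj_unit: "norm z = 1 \<Longrightarrow> cnj z = inverse (z::complex)"
proof -
  assume "norm z = 1"
  then have "z * cnj z = 1" using complex_norm_square[of z] by simp
  then show ?thesis by (metis inverse_unique)
qed

lemma evalT_cnjT: "norm z = 1 \<Longrightarrow> evalT (cnjT L) z = cnj (evalT L z)"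
  unfolding cnjT_def by (induction L) (auto simp: cnj_unit complex_cnj_power_int power_int_minus power_int_inverse)

lemma cont_evalT: "0 \<notin> S \<Longrightarrow> continuous_on S (evalT L)"
proof (induction L)
  case Nil
  then show ?case by simp
next
  case (Cons p L)
  have "continuous_on S (\<lambda>z. fst p * z powi snd p + evalT L z)"
    by (intro continuous_intros Cons.IH[OF Cons.prems]) (use Cons.prems in auto)
  then show ?case by simp
qed

lemma SW:
  fixes f :: "complex \<Rightarrow> real"
  assumes f: "continuous_on (sphere 0 1) f" and e: "0 < e"
  shows "\<exists>L. \<forall>z\<in>sphere 0 1. \<bar>f z - Re (evalT L z)\<bar> < e"
proof -
  define S :: "complex set" where "S = sphere 0 1"
  define PP where "PP g \<longleftrightarrow> (\<exists>L. \<forall>z\<in>S. g z = Re (evalT L z))" for g :: "complex \<Rightarrow> real"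
  have S0: "0 \<notin> S" unfolding S_def by simp
  have "\<exists>g. PP g \<and> (\<forall>x\<in>S. \<bar>f x - g x\<bar> < e)"
  proof (rule Stone_Weierstrass_HOL)
    show "compact S" unfolding S_def by simp
    show "PP (\<lambda>x. c)" for c
      unfolding PP_def by (rule exI[of _ "[(of_real c, 0)]"]) simp
    show "continuous_on S g" if "PP g" for g
    proof -
      obtain L where L: "\<forall>z\<in>S. g z = Re (evalT L z)" using \<open>PP g\<close> unfolding PP_def by blast
      have "continuous_on S (\<lambda>z. Re (evalT L z))"
        by (intro continuous_intros cont_evalT[OF S0])
      then show ?thesis using continuous_on_cong[of S S g "\<lambda>z. Re (evalT L z)"] L by simp
    qed
    show "PP (\<lambda>x. g1 x + g2 x)" if PQ: "PP g1 \<and> PP g2" for g1 g2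
    proof -
      obtain L1 where L1: "\<forall>z\<in>S. g1 z = Re (evalT L1 z)" using PQ unfolding PP_def by blast
      obtain L2 where L2: "\<forall>z\<in>S. g2 z = Re (evalT L2 z)" using PQ unfolding PP_def by blast
      show ?thesis unfolding PP_def
        by (rule exI[of _ "L1 @ L2"]) (simp add: evalT_append L1 L2)
    qed
    show "PP (\<lambda>x. g1 x * g2 x)" if PQ: "PP g1 \<and> PP g2" for g1 g2
    proof -
      obtain L1 where L1: "\<forall>z\<in>S. g1 z = Re (evalT L1 z)" using PQ unfolding PP_def by blast
      obtain L2 where L2: "\<forall>z\<in>S. g2 z = Re (evalT L2 z)" using PQ unfolding PP_def by blast
      have "g1 z * g2 z = Re (evalT (scaleT (1/2) (mulT L1 L2 @ mulT L1 (cnjT L2))) z)" if z: "z \<in> S" for z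
      proof -
        have nz: "z \<noteq> 0" "norm z = 1" using z unfolding S_def by auto
        define X where "X = evalT L1 z"
        define Y where "Y = evalT L2 z"
        have e1: "evalT (scaleT (1/2) (mulT L1 L2 @ mulT L1 (cnjT L2))) z = (X * Y + X * cnj Y) / 2"
          unfolding X_def Y_def by (simp add: evalT_scale evalT_append evalT_mulT[OF nz(1)] evalT_cnjT[OF nz(2)])
        have e2: "Re ((X * Y + X * cnj Y) / 2) = Re X * Re Y" by (simp add: algebra_simps)
        have e3: "g1 z * g2 z = Re X * Re Y" using L1 L2 z unfolding X_def Y_def by simp
        show ?thesis by (simp only: e1 e2 e3)
      qed
      then show ?thesis unfolding PP_def by blast
    qed
    show "\<exists>g. PP g \<and> g x \<noteq> g y" if "x \<in> S \<and> y \<in> S \<and> x \<noteq> y" for x y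
    proof (cases "Re x = Re y")
      case False
      have "PP Re" unfolding PP_def by (rule exI[of _ "[(1, 1)]"]) simp
      then show ?thesis using False by blast
    next
      case True
      then have "Im x \<noteq> Im y" using that complex_eqI by blast
      moreover have "PP Im" unfolding PP_def by (rule exI[of _ "[(-\<i>, 1)]"]) simp
      ultimately show ?thesis by blast
    qed
    show "continuous_on S f" using f unfolding S_def .
    show "0 < e" by (rule e)
  qed
  then obtain g L where gL: "\<forall>z\<in>sphere 0 1. g z = Re (evalT L z)" "\<forall>x\<in>sphere 0 1. \<bar>f x - g x\<bar> < e"
    unfolding PP_def S_def by blast
  show ?thesis by (rule exI[of _ L]) (use gL in auto)
qed

lemma tendsto_one_seq: "(\<lambda>N. of_nat N / of_nat N :: complex) \<longlonglongrightarrow> 1"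
proof (rule Lim_transform_eventually[OF tendsto_const])
  show "\<forall>\<^sub>F N in sequentially. (1::complex) = of_nat N / of_nat N"
    by (rule eventually_sequentiallyI[of 1]) simp
qed

lemma W1:
  fixes u :: "nat \<Rightarrow> real"
  assumes W: "\<And>h::int. h \<noteq> 0 \<Longrightarrow> (\<lambda>N. (\<Sum>n<N. cis (2*pi * of_int h*u n)) / of_nat N) \<longlonglongrightarrow> 0"
  shows "(\<lambda>N. (\<Sum>n<N. evalT L (cis (2*pi*u n))) / of_nat N) \<longlonglongrightarrow> meanT L"
proof (induction L)
  case Nil
  then show ?case by simp
next
  case (Cons p L)
  have eq: "(\<Sum>n<N. evalT (p#L) (cis (2*pi*u n))) / of_nat N =
      fst p * ((\<Sum>n<N. cis (2*pi * of_int (snd p)*u n)) / of_nat N) + (\<Sum>n<N. evalT L (cis (2*pi*u n))) / of_nat N" for N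
    by (simp add: sum.distrib sum_distrib_left add_divide_distrib cis_power_int mult_ac)
  have l1: "(\<lambda>N. (\<Sum>n<N. cis (2*pi * of_int (snd p)*u n)) / of_nat N) \<longlonglongrightarrow> (if snd p = 0 then 1 else 0)"
  proof (cases "snd p = 0")
    case True
    then show ?thesis using tendsto_one_seq by simp
  next
    case False
    then show ?thesis using W[OF False] by simp
  qed
  have m: "meanT (p#L) = fst p * (if snd p = 0 then 1 else 0) + meanT L" by simp
  show ?case unfolding eq m
    by (intro tendsto_intros l1 Cons.IH)
qed

lemma geo_zero:
  fixes M :: nat and h :: int
  assumes "h \<noteq> 0" "\<bar>h\<bar> < int M"
  shows "(\<Sum>m<M. cis (2*pi*real m/real M) powi h) = 0"
proof -
  define \<omega> where "\<omega> = cis (2*pi * of_int h/real M)"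
  have Mpos: "M > 0" using assms by auto
  have t: "cis (2*pi*real m/real M) powi h = \<omega>^m" for m
  proof -
    have a: "of_int h * (2*pi*real m/real M) = real m * (2*pi * of_int h/real M)" by (simp add: field_simps)
    show ?thesis unfolding cis_power_int a \<omega>_def by (rule Complex.DeMoivre[symmetric])
  qed
  have wM: "\<omega>^M = 1"
  proof -
    have "\<omega>^M = cis (2*pi * of_int h)" unfolding \<omega>_def Complex.DeMoivre using Mpos
      by (simp add: field_simps)
    also have "cis (2*pi * of_int h) = 1" by (rule cis_multiple_2pi) simp
    finally show ?thesis .
  qed
  have w1: "\<omega> \<noteq> 1"
  proof
    assume "\<omega> = 1"
    then have "cos (2*pi * of_int h/real M) = 1" unfolding \<omega>_def by (metis Re_complex_of_real cis.sel(1) one_complex.sel(1))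
    then obtain n :: int where n: "2*pi * of_int h/real M = of_int n * 2 * pi" using cos_one_2pi_int by blast
    then have "of_int h = of_int n * real M" using Mpos by (simp add: field_simps)
    then have hn: "h = n * int M" by (metis of_int_eq_iff of_int_mult of_int_of_nat_eq)
    then have "n \<noteq> 0" using assms by auto
    then have "1 \<le> \<bar>n\<bar>" by linarith
    then have "int M * 1 \<le> \<bar>n\<bar> * int M" by (metis mult.commute mult_left_mono of_nat_0_le_iff)
    then have "\<bar>n * int M\<bar> \<ge> int M" by (simp add: abs_mult)
    then show False using hn assms by simp
  qed
  have "(\<Sum>m<M. cis (2*pi*real m/real M) powi h) = (\<Sum>m<M. \<omega>^m)" using t by simp
  also have "\<dots> = 0" using w1 wM by (simp add: sum_gp_strict)
  finally show ?thesis .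
qed

lemma W2:
  fixes M :: nat
  assumes "M > 0" "\<forall>p\<in>set L. \<bar>snd p\<bar> < int M"
  shows "(\<Sum>m<M. evalT L (cis (2*pi*real m/real M))) / of_nat M = meanT L"
  using assms(2)
proof (induction L)
  case Nil
  then show ?case by simp
next
  case (Cons p L)
  have s: "(\<Sum>m<M. cis (2*pi*real m/real M) powi snd p) = (if snd p = 0 then of_nat M else 0)"
    using geo_zero[of "snd p" M] Cons.prems by auto
  have "(\<Sum>m<M. evalT (p#L) (cis (2*pi*real m/real M))) / of_nat M =
     fst p * (\<Sum>m<M. cis (2*pi*real m/real M) powi snd p) / of_nat M + (\<Sum>m<M. evalT L (cis (2*pi*real m/real M))) / of_nat M"
    by (simp add: sum.distrib sum_distrib_left add_divide_distrib)
  also have "\<dots> = (if snd p = 0 then fst p else 0) + meanT L" using s Cons assms(1) by auto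
  finally show ?case by simp
qed



definition tri :: "real \<Rightarrow> real \<Rightarrow> real \<Rightarrow> real \<Rightarrow> real" where
  "tri A B d t = max 0 (min 1 (min ((t - A)/d) ((B - t)/d)))"

lemma tri_nonneg: "0 \<le> tri A B d t" unfolding tri_def by simp
lemma tri_le1: "tri A B d t \<le> 1" unfolding tri_def by simp
lemma maxmin0: "m \<le> 0 \<Longrightarrow> max 0 (min 1 m) = (0::real)" by (simp add: max_def min_def)

lemma tri_zero1: "d > 0 \<Longrightarrow> t \<le> A \<Longrightarrow> tri A B d t = 0"
proof -
  assume "d > 0" "t \<le> A"
  then have h: "(t - A)/d \<le> 0" by (simp add: divide_nonpos_pos)
  then have "min ((t-A)/d) ((B-t)/d) \<le> 0" by (simp add: min_le_iff_disj)
  then show ?thesis unfolding tri_def by (rule maxmin0)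
qed
lemma tri_zero2: "d > 0 \<Longrightarrow> B \<le> t \<Longrightarrow> tri A B d t = 0"
proof -
  assume "d > 0" "B \<le> t"
  then have h: "(B - t)/d \<le> 0" by (simp add: divide_nonpos_pos)
  then have "min ((t-A)/d) ((B-t)/d) \<le> 0" by (simp add: min_le_iff_disj)
  then show ?thesis unfolding tri_def by (rule maxmin0)
qed
lemma tri_one: "d > 0 \<Longrightarrow> A + d \<le> t \<Longrightarrow> t \<le> B - d \<Longrightarrow> tri A B d t = 1"
  unfolding tri_def by (auto simp: min_def max_def field_simps)

lemma Arg2pi_cis: "0 \<le> t \<Longrightarrow> t < 1 \<Longrightarrow> Arg2pi (cis (2*pi*t)) = 2*pi*t"
  by (rule Arg2pi_unique[of 1]) (auto simp: cis_conv_exp)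

definition fcirc :: "real \<Rightarrow> real \<Rightarrow> real \<Rightarrow> complex \<Rightarrow> real" where
  "fcirc A B d z = tri A B d (Arg2pi z / (2*pi))"

lemma fcirc_cis: "0 \<le> t \<Longrightarrow> t < 1 \<Longrightarrow> fcirc A B d (cis (2*pi*t)) = tri A B d t"
  unfolding fcirc_def by (simp add: Arg2pi_cis)

lemma fcirc_cont:
  assumes d: "0 < d" "d \<le> 1/2" "d \<le> A" "B \<le> 1 - d"
  shows "continuous_on (sphere 0 1) (fcirc A B d)"
proof -
  define S :: "complex set" where "S = sphere 0 1"
  have "continuous (at z within S) (fcirc A B d)" if z: "z \<in> S" for z
  proof (cases "z \<in> \<real>\<^sub>\<ge>\<^sub>0")
    case False
    have "continuous (at z) (\<lambda>z. Arg2pi z)" by (rule continuous_at_Arg2pi[OF False])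
    then have "continuous (at z) (fcirc A B d)"
      unfolding fcirc_def tri_def by (intro continuous_intros) (use d in auto)
    then show ?thesis by (rule continuous_at_imp_continuous_within)
  next
    case True
    then have z1: "z = 1" using z unfolding S_def
      by (auto simp: complex_nonneg_Reals_iff complex_eq_iff cmod_eq_Re)
    have "Arg2pi 1 = 0" using Arg2pi_cis[of 0] by simp
    then have f1: "fcirc A B d 1 = 0" unfolding fcirc_def using tri_zero1[of d 0 A B] d by simp
    define c where "c = cos (2*pi*d)"
    have c1: "c < 1" unfolding c_def using cos_monotone_0_pi[of 0 "2*pi*d"] d by simp
    have zero: "fcirc A B d y = 0" if y: "y \<in> S" "c < Re y" for y
    proof -
      define th where "th = Arg2pi y"
      have th: "0 \<le> th" "th < 2*pi" unfolding th_def using Arg2pi by auto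
      have cy: "cos th = Re y" using cos_Arg2pi[of y] y unfolding S_def th_def by simp
      have "th < 2*pi*d \<or> th > 2*pi - 2*pi*d"
      proof (rule ccontr)
        assume "\<not> ?thesis"
        then have h: "2*pi*d \<le> th" "th \<le> 2*pi - 2*pi*d" by auto
        have "cos th \<le> c"
        proof (cases "th \<le> pi")
          case True
          show ?thesis unfolding c_def by (rule cos_monotone_0_pi_le) (use h True d in auto)
        next
          case False
          have "cos th = cos (2*pi - th)" by (simp add: cos_diff)
          also have "\<dots> \<le> c" unfolding c_def by (rule cos_monotone_0_pi_le) (use h False d in auto)
          finally show ?thesis .
        qed
        then show False using cy y by simp
      qed
      then have "th / (2*pi) < d \<or> th / (2*pi) > 1 - d" by (auto simp: field_simps)
      then show ?thesis unfolding fcirc_def th_def[symmetric]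
        using tri_zero1[of d "th/(2*pi)" A B] tri_zero2[of d B "th/(2*pi)" A] d by auto
    qed
    have "((\<lambda>_. 0) \<longlongrightarrow> 0) (at 1 within S)" by simp
    then have "(fcirc A B d \<longlongrightarrow> 0) (at 1 within S)"
    proof (rule Lim_transform_within)
      show "0 < 1 - c" using c1 by simp
      fix y assume y: "y \<in> S" "0 < dist y 1" "dist y 1 < 1 - c"
      have "\<bar>Re (y - 1)\<bar> \<le> cmod (y - 1)" by (rule abs_Re_le_cmod)
      then have "c < Re y" using y(3) by (simp add: dist_norm)
      then show "0 = fcirc A B d y" using zero y by simp
    qed
    then show ?thesis unfolding continuous_within z1 f1 .
  qed
  then show ?thesis unfolding S_def[symmetric] using continuous_on_eq_continuous_within by blast
qed

lemma count_lb:
  fixes M :: nat and x y :: real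
  assumes "0 \<le> x" "x \<le> y" "y < 1" "M > 0"
  shows "real M * (y - x) - 1 \<le> real (card {m. m < M \<and> x \<le> real m / real M \<and> real m / real M \<le> y})"
proof -
  define i where "i = \<lceil>real M * x\<rceil>"
  define j where "j = \<lfloor>real M * y\<rfloor>"
  have Mp: "real M > 0" using assms by simp
  have "0 \<le> real M * x" using assms by simp
  then have i0: "0 \<le> i" unfolding i_def by linarith
  have ilt: "real_of_int i < real M * x + 1" unfolding i_def by linarith
  have ige: "real M * x \<le> real_of_int i" unfolding i_def by linarith
  have jgt: "real M * y - 1 < real_of_int j" unfolding j_def by linarith
  have jle: "real_of_int j \<le> real M * y" unfolding j_def by linarith
  show ?thesis
  proof (cases "j < i")
    case True
    then have "real_of_int j + 1 \<le> real_of_int i" by linarith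
    then have "real M * (y - x) - 1 < 0" using ilt jgt by (simp add: algebra_simps)
    then show ?thesis by simp
  next
    case False
    then have j0: "0 \<le> j" using i0 by simp
    have sub: "{nat i..nat j} \<subseteq> {m. m < M \<and> x \<le> real m / real M \<and> real m / real M \<le> y}"
    proof
      fix m assume "m \<in> {nat i..nat j}"
      then have m: "i \<le> int m" "int m \<le> j" using i0 j0 by auto
      then have m': "real_of_int i \<le> real m" "real m \<le> real_of_int j" by linarith+
      have "real M * x \<le> real m" using m' ige by linarith
      then have a: "x \<le> real m / real M" using Mp by (simp add: field_simps)
      have "real m \<le> real M * y" using m' jle by linarith
      then have b: "real m / real M \<le> y" using Mp by (simp add: field_simps)
      have "real M * y < real M" using Mp assms by simp
      then have "real m < real M" using \<open>real m \<le> real M * y\<close> by linarith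
      then have "m < M" by simp
      then show "m \<in> {m. m < M \<and> x \<le> real m / real M \<and> real m / real M \<le> y}" using a b by simp
    qed
    have fin: "finite {m. m < M \<and> x \<le> real m / real M \<and> real m / real M \<le> y}" by simp
    have "card {nat i..nat j} \<le> card {m. m < M \<and> x \<le> real m / real M \<and> real m / real M \<le> y}"
      by (rule card_mono[OF fin sub])
    moreover have "real (card {nat i..nat j}) = real_of_int j + 1 - real_of_int i"
      using False i0 j0 by (simp add: of_nat_diff)
    ultimately have "real_of_int j + 1 - real_of_int i \<le> real (card {m. m < M \<and> x \<le> real m / real M \<and> real m / real M \<le> y})"
      by (metis of_nat_le_iff)
    then show ?thesis using ilt jgt by (simp add: algebra_simps)
  qed
qed

lemma bound_exists: "\<exists>H::int. \<forall>p\<in>set L. \<bar>snd p\<bar> < H"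
proof (induction L)
  case Nil then show ?case by simp
next
  case (Cons p L)
  then obtain H where "\<forall>q\<in>set L. \<bar>snd q\<bar> < H" by blast
  then show ?case by (intro exI[of _ "max H (\<bar>snd p\<bar> + 1)"]) auto
qed

definition ind :: "real \<Rightarrow> real \<Rightarrow> real \<Rightarrow> real" where
  "ind a b t = (if a \<le> t \<and> t < b then 1 else 0)"



lemma Re_sum_div: "Re ((\<Sum>n<N. f n) / of_nat N) = (\<Sum>n<N. Re (f n)) / real N"
  by (simp add: Re_divide_of_nat)

lemma weyl_lb:
  fixes u :: "nat \<Rightarrow> real"
  assumes u01: "\<And>n. 0 \<le> u n \<and> u n < 1"
  and W: "\<And>h::int. h \<noteq> 0 \<Longrightarrow> (\<lambda>N. (\<Sum>n<N. cis (2*pi * of_int h*u n)) / of_nat N) \<longlonglongrightarrow> 0"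
  and ab: "0 \<le> a" "a \<le> b" "b \<le> 1" and e: "\<epsilon> > 0"
  shows "\<forall>\<^sub>F N in sequentially. b - a - \<epsilon> \<le> (\<Sum>n<N. ind a b (u n)) / real N"
proof (cases "b - a \<le> \<epsilon>")
  case True
  have "b - a - \<epsilon> \<le> (\<Sum>n<N. ind a b (u n)) / real N" for N
  proof -
    have "0 \<le> (\<Sum>n<N. ind a b (u n))" by (intro sum_nonneg) (simp add: ind_def)
    then have "0 \<le> (\<Sum>n<N. ind a b (u n)) / real N" by simp
    then show ?thesis using True by linarith
  qed
  then show ?thesis by simp
next
  case False
  define d where "d = \<epsilon> / 8"
  have d: "0 < d" "d \<le> 1/8" "8 * d < b - a" using e False ab unfolding d_def by auto
  define A where "A = a + d"
  define B where "B = b - d"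
  have dA: "0 < d" "d \<le> 1/2" "d \<le> A" "B \<le> 1 - d" using d ab unfolding A_def B_def by auto
  define f where "f = fcirc A B d"
  have fc: "continuous_on (sphere 0 1) f" unfolding f_def by (rule fcirc_cont[OF dA])
  obtain L where L: "\<forall>z\<in>sphere 0 1. \<bar>f z - Re (evalT L z)\<bar> < d" using SW[OF fc d(1)] by blast
  define g where "g z = Re (evalT L z)" for z
  have gcis: "tri A B d t - d \<le> g (cis (2*pi*t))" "g (cis (2*pi*t)) \<le> tri A B d t + d"
    if "0 \<le> t" "t < 1" for t
  proof -
    have "\<bar>f (cis (2*pi*t)) - g (cis (2*pi*t))\<bar> < d" using L unfolding g_def by simp
    moreover have "f (cis (2*pi*t)) = tri A B d t" unfolding f_def using fcirc_cis that by simp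
    ultimately show "tri A B d t - d \<le> g (cis (2*pi*t))" "g (cis (2*pi*t)) \<le> tri A B d t + d" by linarith+
  qed
  obtain H :: int where H: "\<forall>p\<in>set L. \<bar>snd p\<bar> < H" using bound_exists by blast
  define M :: nat where "M = nat H + nat \<lceil>1/d\<rceil> + 1"
  have Mpos: "M > 0" unfolding M_def by simp
  have "0 < 1/d" using d by simp
  then have "-1 < 1/d" by linarith
  then have c0: "0 \<le> \<lceil>1/d\<rceil>" by simp
  have i1: "int M = int (nat H) + int (nat \<lceil>1/d\<rceil>) + 1" by (simp only: M_def of_nat_add of_nat_1)
  have i2: "H \<le> int (nat H)" by simp
  have HM: "H \<le> int M" using i1 i2 by linarith
  have MH: "\<forall>p\<in>set L. \<bar>snd p\<bar> < int M" using H HM by force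
  have "1/d \<le> real M" unfolding M_def by linarith
  then have Md: "1 / real M \<le> d" using d Mpos by (simp add: field_simps)
  define \<mu> where "\<mu> = Re (meanT L)"
  have mu_eq: "\<mu> = (\<Sum>m<M. g (cis (2*pi*real m/real M))) / real M"
    unfolding \<mu>_def W2[OF Mpos MH, symmetric] Re_sum_div g_def ..
  define Cs where "Cs = {m. m < M \<and> a + 2*d \<le> real m / real M \<and> real m / real M \<le> b - 2*d}"
  have cnt: "real M * ((b - 2*d) - (a + 2*d)) - 1 \<le> real (card Cs)"
    unfolding Cs_def by (rule count_lb) (use d ab Mpos in auto)
  have "real (card Cs) = (\<Sum>m\<in>Cs. tri A B d (real m / real M))"
    by (simp add: Cs_def tri_one d A_def B_def)
  also have "\<dots> \<le> (\<Sum>m<M. tri A B d (real m / real M))"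
    by (rule sum_mono2) (auto simp: Cs_def tri_nonneg)
  also have "\<dots> \<le> (\<Sum>m<M. g (cis (2*pi*real m/real M)) + d)"
  proof (rule sum_mono)
    fix m assume "m \<in> {..<M}"
    then have "0 \<le> real m / real M" "real m / real M < 1" using Mpos by auto
    from gcis(1)[OF this] show "tri A B d (real m / real M) \<le> g (cis (2*pi*real m/real M)) + d" by simp
  qed
  also have "\<dots> = real M * \<mu> + real M * d" using mu_eq Mpos by (simp add: sum.distrib)
  finally have "real M * ((b - 2*d) - (a + 2*d)) - 1 \<le> real M * \<mu> + real M * d" using cnt by linarith
  then have "(b - 2*d) - (a + 2*d) - 1 / real M \<le> \<mu> + d" using Mpos by (simp add: field_simps)
  then have mu_lb: "b - a - 6*d \<le> \<mu>" using Md by linarith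
  have lim: "(\<lambda>N. (\<Sum>n<N. g (cis (2*pi*u n))) / real N) \<longlonglongrightarrow> \<mu>"
  proof -
    have "(\<lambda>N. Re ((\<Sum>n<N. evalT L (cis (2*pi*u n))) / of_nat N)) \<longlonglongrightarrow> Re (meanT L)"
      by (intro tendsto_intros W1[OF W])
    then show ?thesis unfolding Re_sum_div g_def \<mu>_def .
  qed
  have ev1: "\<forall>\<^sub>F N in sequentially. \<mu> - d < (\<Sum>n<N. g (cis (2*pi*u n))) / real N"
    using order_tendstoD(1)[OF lim] d by simp
  have ev2: "\<forall>\<^sub>F N in sequentially. (0::nat) < N" by (rule eventually_gt_at_top)
  show ?thesis
  proof (rule eventually_mono[OF eventually_conj[OF ev1 ev2]])
    fix N :: nat assume N: "\<mu> - d < (\<Sum>n<N. g (cis (2*pi*u n))) / real N \<and> 0 < N"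
    have "(\<Sum>n<N. g (cis (2*pi*u n))) \<le> (\<Sum>n<N. ind a b (u n) + d)"
    proof (rule sum_mono)
      fix n assume "n \<in> {..<N}"
      have "g (cis (2*pi*u n)) \<le> tri A B d (u n) + d" using gcis(2) u01 by simp
      moreover have "tri A B d (u n) \<le> ind a b (u n)"
      proof (cases "a \<le> u n \<and> u n < b")
        case True then show ?thesis using tri_le1 by (simp add: ind_def)
      next
        case False
        then have "u n \<le> A \<or> B \<le> u n" unfolding A_def B_def using d by auto
        then have "tri A B d (u n) = 0" using tri_zero1 tri_zero2 d by blast
        then show ?thesis by (simp add: ind_def)
      qed
      ultimately show "g (cis (2*pi*u n)) \<le> ind a b (u n) + d" by simp
    qed
    also have "\<dots> = (\<Sum>n<N. ind a b (u n)) + real N * d" by (simp add: sum.distrib)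
    finally have "(\<Sum>n<N. g (cis (2*pi*u n))) / real N \<le> (\<Sum>n<N. ind a b (u n)) / real N + d"
      using N by (simp add: field_simps)
    then show "b - a - \<epsilon> \<le> (\<Sum>n<N. ind a b (u n)) / real N" using N mu_lb unfolding d_def by linarith
  qed
qed

lemma card_ind: fixes N :: nat shows "real (card {n. n < N \<and> a \<le> u n \<and> u n < b}) = (\<Sum>n<N. ind a b (u n))"
proof -
  have "{n. n < N \<and> a \<le> u n \<and> u n < b} = {..<N} \<inter> {n. a \<le> u n \<and> u n < b}" by auto
  moreover have "real (card ({..<N} \<inter> {n. a \<le> u n \<and> u n < b})) = (\<Sum>n\<in>{..<N} \<inter> {n. a \<le> u n \<and> u n < b}. 1)"
    by simp
  moreover have "\<dots> = (\<Sum>n<N. if n \<in> {n. a \<le> u n \<and> u n < b} then 1 else 0)"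
    by (rule sum.inter_restrict) simp
  ultimately show ?thesis unfolding ind_def by simp
qed

lemma weyl:
  fixes u :: "nat \<Rightarrow> real"
  assumes u01: "\<And>n. 0 \<le> u n \<and> u n < 1"
  and W: "\<And>h::int. h \<noteq> 0 \<Longrightarrow> (\<lambda>N. (\<Sum>n<N. cis (2*pi * of_int h*u n)) / of_nat N) \<longlonglongrightarrow> 0"
  and ab: "0 \<le> a" "a < b" "b \<le> 1"
  shows "(\<lambda>N. real (card {n. n < N \<and> a \<le> u n \<and> u n < b}) / real N) \<longlonglongrightarrow> b - a"
proof (rule tendstoI)
  fix e :: real assume e: "0 < e"
  have e3: "e/3 > 0" using e by simp
  have ev: "\<forall>\<^sub>F N in sequentially. (b - a - e/3 \<le> (\<Sum>n<N. ind a b (u n)) / real N \<and>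
        a - 0 - e/3 \<le> (\<Sum>n<N. ind 0 a (u n)) / real N) \<and>
        (1 - b - e/3 \<le> (\<Sum>n<N. ind b 1 (u n)) / real N \<and> (0::nat) < N)"
    by (intro eventually_conj weyl_lb[OF u01 W] e3 eventually_gt_at_top) (use ab in auto)
  show "\<forall>\<^sub>F N in sequentially. dist (real (card {n. n < N \<and> a \<le> u n \<and> u n < b}) / real N) (b - a) < e"
  proof (rule eventually_mono[OF ev])
    fix N :: nat
    assume N: "(b - a - e/3 \<le> (\<Sum>n<N. ind a b (u n)) / real N \<and>
        a - 0 - e/3 \<le> (\<Sum>n<N. ind 0 a (u n)) / real N) \<and>
        (1 - b - e/3 \<le> (\<Sum>n<N. ind b 1 (u n)) / real N \<and> (0::nat) < N)"
    have one: "ind 0 a (u n) + ind a b (u n) + ind b 1 (u n) = 1" for n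
      using u01[of n] ab unfolding ind_def by auto
    have "(\<Sum>n<N. ind 0 a (u n)) + (\<Sum>n<N. ind a b (u n)) + (\<Sum>n<N. ind b 1 (u n)) = real N"
      using one by (simp add: sum.distrib[symmetric])
    then have "(\<Sum>n<N. ind 0 a (u n)) / real N + (\<Sum>n<N. ind a b (u n)) / real N + (\<Sum>n<N. ind b 1 (u n)) / real N = 1"
      using N by (simp add: add_divide_distrib[symmetric])
    then have "\<bar>(\<Sum>n<N. ind a b (u n)) / real N - (b - a)\<bar> < e" using N e by linarith
    then show "dist (real (card {n. n < N \<and> a \<le> u n \<and> u n < b}) / real N) (b - a) < e"
      unfolding card_ind dist_real_def .
  qed
qed

lemma cis_frac:
  fixes h :: int and x :: real
  shows "cis (2*pi * of_int h * frac x) = cis (2*pi * (of_int h * x))"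
proof -
  have "2*pi * of_int h * frac x = 2*pi * (of_int h * x) - 2*pi * of_int (h * \<lfloor>x\<rfloor>)"
    by (simp add: frac_def algebra_simps)
  then have "cis (2*pi * of_int h * frac x) = cis (2*pi * (of_int h * x)) / cis (2*pi * of_int (h * \<lfloor>x\<rfloor>))"
    by (simp only: cis_divide)
  also have "cis (2*pi * of_int (h * \<lfloor>x\<rfloor>)) = 1" by (rule cis_multiple_2pi) simp
  finally show ?thesis by simp
qed

theorem mainTheorem9:
  fixes \<alpha> :: real
  assumes "\<alpha> \<notin> \<rat>"
  shows "uniformly_distributed_mod1 (\<lambda>n. \<alpha> * real (w n))"
  unfolding uniformly_distributed_mod1_def
proof (intro allI impI)
  fix a b :: real
  assume ab: "0 \<le> a \<and> a < b \<and> b \<le> 1"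
  define u where "u n = frac (\<alpha> * real (w n))" for n
  have u01: "0 \<le> u n \<and> u n < 1" for n unfolding u_def by (simp add: frac_lt_1)
  have W: "(\<lambda>N. (\<Sum>n<N. cis (2*pi * of_int h*u n)) / of_nat N) \<longlonglongrightarrow> 0" if h: "h \<noteq> 0" for h :: int
  proof -
    have irr: "of_int h * \<alpha> \<notin> \<rat>"
    proof
      assume "of_int h * \<alpha> \<in> \<rat>"
      then have "(of_int h * \<alpha>) / of_int h \<in> \<rat>" by (intro Rats_divide) auto
      then show False using h assms by simp
    qed
    have eq: "cis (2*pi * of_int h*u n) = E (of_int h * \<alpha>) n" for n
      unfolding u_def E_def cis_frac by (simp add: mult_ac)
    show ?thesis unfolding eq by (rule weyl_sum[OF irr])
  qed
  show "(\<lambda>N. real (card {n. n < N \<and> a \<le> frac (\<alpha> * real (w n)) \<and> frac (\<alpha> * real (w n)) < b}) / real N)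
          \<longlonglongrightarrow> b - a"
    using weyl[OF u01 W, of a b] ab unfolding u_def by auto
qed

end
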